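(* Let $N\ge1$, $\Psi_N$ the $N\times N$ matrix $(\Psi_N)_{jk}=\binom{j}{k}$, $\Lambda_N=\mathrm{diag}(1,-1,\dots,(-1)^{N-1})$, and $J_N$ the $N\times N$ symmetric tridiagonal matrix with $(J_N)_{kk}=k(2k^2+3k+2-N^2)$ and $(J_N)_{k,k+1}=(J_N)_{k+1,k}=(k+1)(N^2-(k+1)^2)$. Then $$\Psi_N^{-1}J_N\Psi_N=-\Lambda_NJ_N\Lambda_N+(N^2-1)I_N,$$ and moreover $(\Psi_N\Lambda_N)^2=I_N$ and $\Psi_N^\intercal\Psi_N=\Lambda_NT_N^{-1}\Lambda_N$, where $(T_N)_{jk}=\binom{j+k}{j}$.
   Context: Matrix indices start at $0$; $I_N$ is the $N\times N$ identity matrix. *)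

theory Defs
  imports "Jordan_Normal_Form.Gauss_Jordan_Elimination"
begin

definition inv_mat :: "'a :: field mat \<Rightarrow> 'a mat" where
  "inv_mat A = the (mat_inverse A)"

(* Psi_N: (j,k) entry = binomial(j,k), indices from 0 *)
definition Psi :: "nat \<Rightarrow> real mat" where
  "Psi N = mat N N (\<lambda>(j,k). real (j choose k))"

definition Lam :: "nat \<Rightarrow> real mat" where
  "Lam N = mat N N (\<lambda>(j,k). if j = k then (-1) ^ j else 0)"

definition Jm :: "nat \<Rightarrow> real mat" where
  "Jm N = mat N N (\<lambda>(j,k).
     let n = real N; a = real j; b = real k in
     if j = k then a * (2 * a^2 + 3 * a + 2 - n^2)
     else if k = j + 1 then (a + 1) * (n^2 - (a + 1)^2)
     else if j = k + 1 then (b + 1) * (n^2 - (b + 1)^2)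
     else 0)"

definition Tm :: "nat \<Rightarrow> real mat" where
  "Tm N = mat N N (\<lambda>(j,k). real ((j + k) choose j))"

end

theory Submission
  imports Defs
begin

lemma binom_inv_le:
  "(\<Sum>l\<le>j. (-1::real)^l * real (j choose l) * real (l choose k)) = (if j = k then (-1)^k else 0)"
proof (cases "k \<le> j")
  case False
  then show ?thesis by (auto intro!: sum.neutral simp: binomial_eq_0)
next
  case True
  have "(\<Sum>l\<le>j. (-1::real)^l * real (j choose l) * real (l choose k))
      = (\<Sum>l\<in>{k..j}. (-1::real)^l * real (j choose l) * real (l choose k))"
    by (rule sum.mono_neutral_right) (auto simp: binomial_eq_0)
  also have "\<dots> = (\<Sum>i\<in>{0..j-k}. (-1::real)^(k+i) * real (j choose (k+i)) * real ((k+i) choose k))"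
    using sum.atLeastAtMost_shift_0[OF True] by (simp add: comp_def)
  also have "\<dots> = (\<Sum>i\<in>{0..j-k}. (-1::real)^k * real (j choose k) * ((-1)^i * real ((j-k) choose i)))"
  proof (rule sum.cong)
    fix i assume "i \<in> {0..j-k}"
    then have "k + i \<le> j" using True by auto
    then have "(j choose (k+i)) * ((k+i) choose k) = (j choose k) * ((j - k) choose i)"
      using choose_mult[of k "k+i" j] by simp
    then have "real (j choose (k+i)) * real ((k+i) choose k) = real (j choose k) * real ((j - k) choose i)"
      by (metis of_nat_mult)
    then show "(-1::real)^(k+i) * real (j choose (k+i)) * real ((k+i) choose k) = (-1::real)^k * real (j choose k) * ((-1)^i * real ((j-k) choose i))"
      by (simp add: power_add algebra_simps)
  qed simp
  also have "\<dots> = (-1::real)^k * real (j choose k) * (\<Sum>i\<le>j-k. (-1)^i * real ((j-k) choose i))"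
    by (simp add: sum_distrib_left atLeast0AtMost)
  also have "\<dots> = (if j = k then (-1)^k else 0)"
  proof (cases "j = k")
    case True then show ?thesis by simp
  next
    case False
    then have "j - k > 0" using \<open>k \<le> j\<close> by simp
    from choose_alternating_sum[OF this, where 'a=real] False show ?thesis by simp
  qed
  finally show ?thesis .
qed

lemma binom_inv:
  assumes "j < N"
  shows "(\<Sum>l<N. (-1::real)^l * real (j choose l) * real (l choose k)) = (if j = k then (-1)^k else 0)"
proof -
  have "(\<Sum>l<N. (-1::real)^l * real (j choose l) * real (l choose k)) = (\<Sum>l\<le>j. (-1::real)^l * real (j choose l) * real (l choose k))"
    by (rule sum.mono_neutral_right) (use assms in \<open>auto simp: binomial_eq_0\<close>)
  then show ?thesis using binom_inv_le by simp
qed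

lemma vdm:
  assumes "k < N"
  shows "(\<Sum>l<N. real (j choose l) * real (k choose l)) = real ((j + k) choose j)"
proof -
  have "(\<Sum>l<N. real (j choose l) * real (k choose l)) = (\<Sum>l\<le>k. real (j choose l) * real (k choose l))"
    by (rule sum.mono_neutral_right) (use assms in \<open>auto simp: binomial_eq_0\<close>)
  also have "\<dots> = (\<Sum>l\<le>k. real (j choose l) * real (k choose (k - l)))"
    by (rule sum.cong) (auto simp: binomial_symmetric[symmetric])
  also have "\<dots> = real (\<Sum>l\<le>k. (j choose l) * (k choose (k - l)))" by simp
  also have "\<dots> = real ((j + k) choose k)" by (simp only: vandermonde)
  also have "\<dots> = real ((j + k) choose j)" using binomial_symmetric[of j "j+k"] by simp
  finally show ?thesis .
qed

lemma mat_mult_mat: "mat n m f * mat m p g = mat n p (\<lambda>(i,k). \<Sum>l<m. f (i,l) * g (l,k))"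
  by (rule eq_matI) (auto simp: scalar_prod_def lessThan_atLeast0)

lemma sum_delta_r: "(\<Sum>l<(N::nat). f l * (if l = k then g l else 0)) = (if k < N then f k * g k else (0::real))"
  proof -
  have "(\<Sum>l<N. f l * (if l = k then g l else 0)) = (\<Sum>l<N. if l = k then f l * g l else 0)" by (rule sum.cong) auto
  also have "\<dots> = (if k < N then f k * g k else 0)" by (subst sum.delta) auto
  finally show ?thesis .
qed

lemma sum_delta_l: "(\<Sum>l<(N::nat). (if j = l then g l else 0) * f l) = (if j < N then g j * f j else (0::real))"
  proof -
  have "(\<Sum>l<N. (if j = l then g l else 0) * f l) = (\<Sum>l<N. if j = l then g l * f l else 0)" by (rule sum.cong) auto
  also have "\<dots> = (if j < N then g j * f j else 0)" by (subst sum.delta') auto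
  finally show ?thesis .
qed

definition Qm :: "nat \<Rightarrow> real mat" where
  "Qm N = mat N N (\<lambda>(j,k). (-1)^j * real (j choose k) * (-1)^k)"

lemma carr: "Psi N \<in> carrier_mat N N" "Lam N \<in> carrier_mat N N" "Jm N \<in> carrier_mat N N"
  "Tm N \<in> carrier_mat N N" "Qm N \<in> carrier_mat N N" "transpose_mat (Psi N) \<in> carrier_mat N N"
  by (auto simp: Psi_def Lam_def Jm_def Tm_def Qm_def)

lemma PsiT: "transpose_mat (Psi N) = mat N N (\<lambda>(j,k). real (k choose j))"
  by (rule eq_matI) (auto simp: Psi_def)

lemma PsiLam: "Psi N * Lam N = mat N N (\<lambda>(j,k). real (j choose k) * (-1)^k)"
  unfolding Psi_def Lam_def mat_mult_mat
  by (rule eq_matI) (auto simp: sum_delta_r)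

lemma PsiTLam: "transpose_mat (Psi N) * Lam N = mat N N (\<lambda>(j,k). real (k choose j) * (-1)^k)"
  unfolding PsiT Lam_def mat_mult_mat
  by (rule eq_matI) (auto simp: sum_delta_r)

lemma LamLam: "Lam N * Lam N = 1\<^sub>m N"
  unfolding Lam_def mat_mult_mat
  by (rule eq_matI) (auto simp: sum_delta_r simp flip: power_add)

lemma LamXLam: "Lam N * mat N N f * Lam N = mat N N (\<lambda>(j,k). (-1)^j * f (j,k) * (-1)^k)"
  unfolding Lam_def mat_mult_mat
  by (rule eq_matI) (auto simp: sum_delta_r sum_delta_l)

lemma PLPL: "(Psi N * Lam N) * (Psi N * Lam N) = 1\<^sub>m N"
  unfolding PsiLam mat_mult_mat
proof (rule eq_matI, goal_cases)
  case (1 i j)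
  have "(\<Sum>l<N. real (i choose l) * (-1)^l * (real (l choose j) * (-1)^j))
      = (\<Sum>l<N. (-1::real)^l * real (i choose l) * real (l choose j)) * (-1)^j"
    unfolding sum_distrib_right by (rule sum.cong) (simp_all add: algebra_simps)
  also have "\<dots> = (if i = j then 1 else 0)" using 1 binom_inv[of i N j]
    by (simp flip: power_add)
  finally show ?case using 1 by simp
qed auto

lemma PsiQ: "Psi N * Qm N = 1\<^sub>m N"
  unfolding Psi_def Qm_def mat_mult_mat
proof (rule eq_matI, goal_cases)
  case (1 i j)
  have "(\<Sum>l<N. real (i choose l) * ((-1)^l * real (l choose j) * (-1)^j))
      = (\<Sum>l<N. (-1::real)^l * real (i choose l) * real (l choose j)) * (-1)^j"
    unfolding sum_distrib_right by (rule sum.cong) (simp_all add: algebra_simps)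
  also have "\<dots> = (if i = j then 1 else 0)" using 1 binom_inv[of i N j]
    by (simp flip: power_add)
  finally show ?case using 1 by simp
qed auto

lemma QPsi: "Qm N * Psi N = 1\<^sub>m N"
  unfolding Psi_def Qm_def mat_mult_mat
proof (rule eq_matI, goal_cases)
  case (1 i j)
  have "(\<Sum>l<N. (-1)^i * real (i choose l) * (-1)^l * real (l choose j))
      = (-1::real)^i * (\<Sum>l<N. (-1::real)^l * real (i choose l) * real (l choose j))"
    by (simp add: sum_distrib_left algebra_simps)
  also have "\<dots> = (if i = j then 1 else 0)" using 1 binom_inv[of i N j]
    by (simp flip: power_add)
  finally show ?case using 1 by simp
qed auto

lemma PLP: "(Psi N * Lam N) * Psi N = Lam N"
  unfolding PsiLam unfolding Psi_def mat_mult_mat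
proof (rule eq_matI, goal_cases)
  case (1 i j)
  have "(\<Sum>l<N. real (i choose l) * (-1)^l * real (l choose j))
      = (\<Sum>l<N. (-1::real)^l * real (i choose l) * real (l choose j))"
    by (simp add: algebra_simps)
  also have "\<dots> = (if i = j then (-1)^j else 0)" using 1 binom_inv[of i N j] by (simp add: Lam_def)
  finally show ?case using 1 by (simp add: Lam_def)
qed (auto simp: Lam_def)

lemma PTLPT: "(transpose_mat (Psi N) * Lam N) * transpose_mat (Psi N) = Lam N"
  unfolding PsiTLam unfolding PsiT mat_mult_mat
proof (rule eq_matI, goal_cases)
  case (1 i j)
  have "(\<Sum>l<N. real (l choose i) * (-1)^l * real (j choose l))
      = (\<Sum>l<N. (-1::real)^l * real (j choose l) * real (l choose i))"
    by (simp add: algebra_simps)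
  also have "\<dots> = (if j = i then (-1)^i else 0)" using 1 binom_inv[of j N i] by (simp add: Lam_def)
  finally show ?case using 1 by (simp add: Lam_def)
qed (auto simp: Lam_def)

lemma TPP: "Tm N = Psi N * transpose_mat (Psi N)"
  by (rule eq_matI) (auto simp: Tm_def Psi_def PsiT scalar_prod_def atLeast0LessThan vdm)

lemma inv_mat_eq:
  assumes "A \<in> carrier_mat n n" "B \<in> carrier_mat n n" "A * B = 1\<^sub>m n" "B * A = 1\<^sub>m n"
  shows "inv_mat A = B"
proof (cases "mat_inverse A")
  case None
  from mat_inverse(1)[OF assms(1) None, of undefined] assms show ?thesis
    by (auto simp: Units_def ring_mat_def)
next
  case (Some C)
  from mat_inverse(2)[OF assms(1) Some] have C: "A * C = 1\<^sub>m n" "C * A = 1\<^sub>m n" "C \<in> carrier_mat n n" by auto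
  have "C = C * (A * B)" using assms C by simp
  also have "\<dots> = (C * A) * B" by (metis assoc_mult_mat C(3) assms(1,2))
  also have "\<dots> = B" using C assms by simp
  finally show ?thesis using Some by (simp add: inv_mat_def)
qed

lemma invertible_of:
  assumes "A \<in> carrier_mat n n" "B \<in> carrier_mat n n" "A * B = 1\<^sub>m n" "B * A = 1\<^sub>m n"
  shows "invertible_mat A"
  using assms unfolding invertible_mat_def inverts_mat_def square_mat.simps by auto

lemma bA: "real (Suc m - k) * real (Suc m choose k) = real (Suc m) * real (m choose k)"
  using binomial_absorb_comp[of "Suc m" k] by (metis diff_Suc_1 of_nat_mult)
lemma bB: "real (Suc k) * real (n choose Suc k) = real (n - k) * real (n choose k)"
  using binomial_absorb_comp[of n k] binomial_absorption[of k n] by (metis of_nat_mult)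

definition d0 :: "real \<Rightarrow> real \<Rightarrow> real" where "d0 n a = a * (2 * a^2 + 3 * a + 2 - n^2)"
definition ee :: "real \<Rightarrow> real \<Rightarrow> real" where "ee n a = (a + 1) * (n^2 - (a + 1)^2)"

lemma alg1:
  fixes n X a b :: real
  assumes "a > 0" "a - b + 1 > 0" "b \<ge> 0"
  shows "d0 n a * X + ee n a * ((a+1) * X / (a - b + 1)) + ee n (a - 1) * ((a - b) * X / a)
   = X * (n^2 - 1 - d0 n b) + ee n (b - 1) * (b * X / (a - b + 1)) + ee n b * ((a - b) * X / (b + 1))"
proof -
  define U1 where "U1 = (a+1) * X / (a - b + 1)"
  define U2 where "U2 = (a - b) * X / a"
  define U3 where "U3 = b * X / (a - b + 1)"
  define U4 where "U4 = (a - b) * X / (b + 1)"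
  have e1: "(a - b + 1) * U1 = (a+1) * X" unfolding U1_def using assms by simp
  have e2: "a * U2 = (a - b) * X" unfolding U2_def using assms by simp
  have e3: "(a - b + 1) * U3 = b * X" unfolding U3_def using assms by simp
  have e4: "(b + 1) * U4 = (a - b) * X" unfolding U4_def using assms by simp
  define D where "D = a * (a - b + 1) * (b + 1)"
  have D0: "D \<noteq> 0" using assms unfolding D_def by simp
  have f1: "D * U1 = a * (b + 1) * ((a+1) * X)" using e1 unfolding D_def by (metis mult.assoc mult.commute)
  have f2: "D * U2 = (a - b + 1) * (b + 1) * ((a - b) * X)" using e2 unfolding D_def by (metis mult.assoc mult.commute)
  have f3: "D * U3 = a * (b + 1) * (b * X)" using e3 unfolding D_def by (metis mult.assoc mult.commute)
  have f4: "D * U4 = a * (a - b + 1) * ((a - b) * X)" using e4 unfolding D_def by (metis mult.assoc mult.commute)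
  have L: "D * (d0 n a * X + ee n a * U1 + ee n (a - 1) * U2) = D * d0 n a * X + ee n a * (D * U1) + ee n (a - 1) * (D * U2)"
    by (simp add: algebra_simps)
  have R: "D * (X * (n^2 - 1 - d0 n b) + ee n (b - 1) * U3 + ee n b * U4) = D * X * (n^2 - 1 - d0 n b) + ee n (b - 1) * (D * U3) + ee n b * (D * U4)"
    by (simp add: algebra_simps)
  have "D * (d0 n a * X + ee n a * U1 + ee n (a - 1) * U2) = D * (X * (n^2 - 1 - d0 n b) + ee n (b - 1) * U3 + ee n b * U4)"
    unfolding L R f1 f2 f3 f4 unfolding D_def d0_def ee_def by (simp add: power2_eq_square algebra_simps)
  then show ?thesis using D0 unfolding U1_def U2_def U3_def U4_def by simp
qed

lemma core:
  fixes n :: real and j k :: nat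
  shows "d0 n j * real (j choose k) + ee n j * real (Suc j choose k)
     + (if j > 0 then ee n (real (j - 1)) * real ((j - 1) choose k) else 0)
   = real (j choose k) * (n^2 - 1 - d0 n k)
     + (if k > 0 then ee n (real (k - 1)) * real (j choose (k - 1)) else 0)
     + ee n k * real (j choose Suc k)"
proof -
  consider "Suc j < k" | "k = Suc j" | "k \<le> j" by linarith
  then show ?thesis
  proof cases
    case 1
    then show ?thesis by (simp add: binomial_eq_0)
  next
    case 2
    then show ?thesis by (simp add: binomial_eq_0)
  next
    case 3
    show ?thesis
    proof (cases j)
      case 0
      with 3 show ?thesis by (simp add: d0_def ee_def)
    next
      case (Suc j')
      define X where "X = real (j choose k)"
      have jk: "real (Suc j - k) = real j - real k + 1" "real (j - k) = real j - real k"
        using 3 by (auto simp: of_nat_diff)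
      have pos: "real j > 0" "real j - real k + 1 > 0" "real k \<ge> 0" using 3 Suc by auto
      have A: "real (Suc j choose k) = (real j + 1) * X / (real j - real k + 1)"
        using bA[of j k] pos unfolding jk X_def by (simp add: field_simps)
      have B: "real (j choose Suc k) = (real j - real k) * X / (real k + 1)"
        using bB[of k j] pos unfolding jk X_def by (simp add: field_simps)
      have C: "real ((j - 1) choose k) = (real j - real k) * X / real j"
        using bA[of j' k] pos Suc unfolding X_def by (simp add: field_simps of_nat_diff 3)
      have jm: "real (j - 1) = real j - 1" using Suc by simp
      have K: "(if k > 0 then ee n (real (k - 1)) * real (j choose (k - 1)) else 0)
             = ee n (real k - 1) * (real k * X / (real j - real k + 1))"
      proof (cases k)
        case 0 then show ?thesis by simp
      next
        case (Suc k')
        have "real (j - k') = real j - real k + 1" using Suc 3 by (simp add: of_nat_diff)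
        then have "real (j choose k') = real k * X / (real j - real k + 1)"
          using bB[of k' j] pos Suc unfolding X_def by (simp add: field_simps)
        then show ?thesis using Suc by simp
      qed
      show ?thesis unfolding K A B C jm using alg1[OF pos, of n X] Suc unfolding X_def by simp
    qed
  qed
qed

lemma Jm_alt: "Jm N = mat N N (\<lambda>(j,l). (if l = j then d0 (real N) (real j) else 0)
   + (if l = j + 1 then ee (real N) (real j) else 0) + (if j = l + 1 then ee (real N) (real l) else 0))"
  by (rule eq_matI) (auto simp: Jm_def Let_def d0_def ee_def)

lemma M_alt: "- (Lam N * Jm N * Lam N) + c \<cdot>\<^sub>m 1\<^sub>m N = mat N N (\<lambda>(i,k).
    (if i = k then c - d0 (real N) (real k) else 0) + (if k = i + 1 then ee (real N) (real i) else 0)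
    + (if i = k + 1 then ee (real N) (real k) else 0))"
  unfolding Jm_alt LamXLam
  by (rule eq_matI) (auto simp flip: power_add)

lemma tri1:
  fixes N j :: nat and x y :: real
  shows "(\<Sum>l<N. ((if l = j then x else 0) + (if l = j + 1 then y else 0) + (if j = l + 1 then z l else 0)) * f l)
    = (if j < N then x * f j else 0) + (if j + 1 < N then y * f (j+1) else 0)
      + (if j > 0 \<and> j - 1 < N then z (j - 1) * f (j - 1) else 0)"
proof -
  have s: "(\<Sum>l<N. ((if l = j then x else 0) + (if l = j + 1 then y else 0) + (if j = l + 1 then z l else 0)) * f l)
     = (\<Sum>l<N. if l = j then x * f l else 0) + (\<Sum>l<N. if l = j + 1 then y * f l else 0)
       + (\<Sum>l<N. if j = l + 1 then z l * f l else 0)"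
  proof -
    have h: "(\<lambda>l. ((if l = j then x else 0) + (if l = j + 1 then y else 0) + (if j = l + 1 then z l else 0)) * f l)
      = (\<lambda>l. (if l = j then x * f l else 0) + (if l = j + 1 then y * f l else 0) + (if j = l + 1 then z l * f l else 0))"
      by (auto simp: fun_eq_iff)
    show ?thesis unfolding h sum.distrib by (rule refl)
  qed
  have t: "(\<Sum>l<N. if j = l + 1 then z l * f l else 0) = (if j > 0 \<and> j - 1 < N then z (j - 1) * f (j - 1) else 0)"
  proof (cases j)
    case 0 then show ?thesis by simp
  next
    case (Suc m)
    have "(\<Sum>l<N. if j = l + 1 then z l * f l else 0) = (\<Sum>l<N. if l = m then z l * f l else 0)"
      using Suc by (intro sum.cong) auto
    also have "\<dots> = (if m < N then z m * f m else 0)" by (subst sum.delta) auto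
    finally show ?thesis using Suc by simp
  qed
  show ?thesis unfolding s t by (simp add: sum.delta)
qed

lemma tri2:
  fixes N k :: nat and x z :: real
  shows "(\<Sum>i<N. f i * ((if i = k then x else 0) + (if k = i + 1 then y i else 0) + (if i = k + 1 then z else 0)))
    = (if k < N then x * f k else 0) + (if k + 1 < N then z * f (k+1) else 0)
      + (if k > 0 \<and> k - 1 < N then y (k - 1) * f (k - 1) else 0)"
proof -
  have "(\<Sum>i<N. f i * ((if i = k then x else 0) + (if k = i + 1 then y i else 0) + (if i = k + 1 then z else 0)))
     = (\<Sum>i<N. ((if i = k then x else 0) + (if i = k + 1 then z else 0) + (if k = i + 1 then y i else 0)) * f i)"
    by (intro sum.cong) (auto simp: algebra_simps)
  also have "\<dots> = (if k < N then x * f k else 0) + (if k + 1 < N then z * f (k+1) else 0)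
      + (if k > 0 \<and> k - 1 < N then y (k - 1) * f (k - 1) else 0)" by (rule tri1)
  finally show ?thesis .
qed

lemma JPsi: "Jm N * Psi N = Psi N * (- (Lam N * Jm N * Lam N) + (real N ^ 2 - 1) \<cdot>\<^sub>m 1\<^sub>m N)"
  unfolding M_alt unfolding Jm_alt Psi_def mat_mult_mat
proof (rule eq_matI, goal_cases)
  case (1 j k)
  then have jk: "j < N" "k < N" by auto
  let ?n = "real N"
  have ee0: "\<And>t. t + 1 = N \<Longrightarrow> ee ?n (real t) = 0" by (auto simp: ee_def)
  have N1: "\<not> Suc 0 < N \<Longrightarrow> N = 1" using jk by auto
  have ee1: "\<not> Suc 0 < N \<Longrightarrow> ee ?n 0 = 0" using N1 by (auto simp: ee_def)
  have L: "(\<Sum>l<N. ((if l = j then d0 ?n (real j) else 0) + (if l = j + 1 then ee ?n (real j) else 0)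
            + (if j = l + 1 then ee ?n (real l) else 0)) * real (l choose k))
     = d0 ?n j * real (j choose k) + ee ?n j * real (Suc j choose k)
     + (if j > 0 then ee ?n (real (j - 1)) * real ((j - 1) choose k) else 0)"
    unfolding tri1 using jk ee0[of j] ee1 by auto
  have R: "(\<Sum>i<N. real (j choose i) * ((if i = k then ?n^2 - 1 - d0 ?n (real k) else 0)
            + (if k = i + 1 then ee ?n (real i) else 0) + (if i = k + 1 then ee ?n (real k) else 0)))
     = real (j choose k) * (?n^2 - 1 - d0 ?n k)
     + (if k > 0 then ee ?n (real (k - 1)) * real (j choose (k - 1)) else 0)
     + ee ?n k * real (j choose Suc k)"
    unfolding tri2 using jk ee0[of k] ee1 by (auto simp: algebra_simps)
  show ?case using jk L R core[of ?n j k] ee0[of k] by (cases "N = 1") auto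
qed auto

theorem mainTheorem8:
  fixes N :: nat
  assumes "N \<ge> 1"
  shows "invertible_mat (Psi N)
    \<and> inv_mat (Psi N) * Jm N * Psi N
           = - (Lam N * Jm N * Lam N) + (real N ^ 2 - 1) \<cdot>\<^sub>m 1\<^sub>m N
    \<and> (Psi N * Lam N) * (Psi N * Lam N) = 1\<^sub>m N
    \<and> invertible_mat (Tm N)
    \<and> transpose_mat (Psi N) * Psi N = Lam N * inv_mat (Tm N) * Lam N"
proof -
  note c = carr[of N]
  define M where "M = - (Lam N * Jm N * Lam N) + (real N ^ 2 - 1) \<cdot>\<^sub>m 1\<^sub>m N"
  have cM: "M \<in> carrier_mat N N" unfolding M_def M_alt by simp
  have inv1: "inv_mat (Psi N) = Qm N" by (rule inv_mat_eq[OF c(1) c(5) PsiQ QPsi])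
  have part2: "inv_mat (Psi N) * Jm N * Psi N = M"
  proof -
    have "inv_mat (Psi N) * Jm N * Psi N = Qm N * (Jm N * Psi N)" unfolding inv1 using c by (simp add: assoc_mult_mat[of _ N N _ N _ N] mult_carrier_mat)
    also have "\<dots> = Qm N * (Psi N * M)" using JPsi unfolding M_def by simp
    also have "\<dots> = (Qm N * Psi N) * M" using c cM by (simp add: assoc_mult_mat[of _ N N _ N _ N] mult_carrier_mat)
    also have "\<dots> = M" unfolding QPsi using cM by simp
    finally show ?thesis .
  qed
  define PT where "PT = transpose_mat (Psi N)"
  have cPT: "PT \<in> carrier_mat N N" unfolding PT_def using c(6) .
  have PTLPT': "PT * Lam N * PT = Lam N" using PTLPT unfolding PT_def .
  have TPP': "Tm N = Psi N * PT" using TPP unfolding PT_def .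
  note cc = c(1,2,4) cPT
  define R where "R = Lam N * PT * Psi N * Lam N"
  have cR: "R \<in> carrier_mat N N" unfolding R_def using cc by (meson mult_carrier_mat)
  have TR: "Tm N * R = 1\<^sub>m N"
  proof -
    have "Tm N * R = Psi N * ((PT * Lam N * PT) * (Psi N * Lam N))"
      unfolding TPP' R_def using cc by (simp add: assoc_mult_mat[of _ N N _ N _ N] mult_carrier_mat)
    also have "\<dots> = Psi N * (Lam N * (Psi N * Lam N))" unfolding PTLPT' ..
    also have "\<dots> = (Psi N * Lam N) * (Psi N * Lam N)" using cc by (simp add: assoc_mult_mat[of _ N N _ N _ N] mult_carrier_mat)
    also have "\<dots> = 1\<^sub>m N" by (rule PLPL)
    finally show ?thesis .
  qed
  have RT: "R * Tm N = 1\<^sub>m N"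
  proof -
    have "R * Tm N = Lam N * (PT * ((Psi N * Lam N * Psi N) * PT))"
      unfolding TPP' R_def using cc by (simp add: assoc_mult_mat[of _ N N _ N _ N] mult_carrier_mat)
    also have "\<dots> = Lam N * ((PT * Lam N) * PT)" unfolding PLP using cc by (simp add: assoc_mult_mat[of _ N N _ N _ N] mult_carrier_mat)
    also have "\<dots> = Lam N * Lam N" unfolding PTLPT' ..
    also have "\<dots> = 1\<^sub>m N" by (rule LamLam)
    finally show ?thesis .
  qed
  have invT: "inv_mat (Tm N) = R" by (rule inv_mat_eq[OF c(4) cR TR RT])
  have last0: "PT * Psi N = Lam N * inv_mat (Tm N) * Lam N"
  proof -
    have "Lam N * inv_mat (Tm N) * Lam N = (Lam N * Lam N) * (PT * Psi N) * (Lam N * Lam N)"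
      unfolding invT R_def using cc by (simp add: assoc_mult_mat[of _ N N _ N _ N] mult_carrier_mat)
    also have "\<dots> = PT * Psi N" unfolding LamLam using cc by (simp add: assoc_mult_mat[of _ N N _ N _ N] mult_carrier_mat)
    finally show ?thesis by simp
  qed
  have last: "transpose_mat (Psi N) * Psi N = Lam N * inv_mat (Tm N) * Lam N"
    using last0 unfolding PT_def .
  show ?thesis
    using invertible_of[OF c(1) c(5) PsiQ QPsi] part2[unfolded M_def] PLPL
      invertible_of[OF c(4) cR TR RT] last by blast
qed

end
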